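(* Let $A\in\mathbb{R}^{m\times n}$ and let $\mathcal{D}$ be a distribution over matrices $S\in\mathbb{R}^{m\times\tau}$. Let $X_0\in\mathbb{R}^{n\times m}$ with $\mathrm{Range}(X_0)\subset\mathrm{Range}(A^\top A)$, and define iterates $$X_{k+1} = X_k - A^\top A S_k\,(S_k^\top A^\top A A^\top A S_k)^\dagger S_k^\top A^\top (A X_k - I),\qquad k\ge 0,$$ where $S_0,S_1,\dots$ are drawn independently from $\mathcal{D}$. Let $H_S \eqdef S(S^\top A^\top A A^\top A S)^\dagger S^\top$ for $S\sim\mathcal{D}$. Then $$\mathbb{E}[X_{k+1}-A^\dagger] = \mathbb{E}[I - A^\top A H_S A^\top A]\;\mathbb{E}[X_k - A^\dagger].$$ Furthermore, if $\mathbb{E}[H_S]$ is finite and positive definite, then $$\mathbb{E}\big[\|X_k - A^\dagger\|^2\big]\le \rho^k\,\|X_0-A^\dagger\|^2,\qquad \rho = 1-\lambda_{\min}^+\big(A^\top A\,\mathbb{E}[H_S]\,A^\top A\big).$$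
   Context: $M^\dagger$ denotes the Moore–Penrose pseudoinverse of a real matrix $M$; $\|\cdot\|$ is the Frobenius norm; $\mathrm{Range}(M)$ is the column space of $M$. For a symmetric positive semidefinite matrix $G$, $\lambda_{\min}^+(G)$ denotes its smallest nonzero eigenvalue. *)

theory Defs
  imports "HOL-Probability.Probability"
begin

definition pinv :: "real^'b^'a \<Rightarrow> real^'a^'b" where
  "pinv M = (THE X. M ** X ** M = M \<and> X ** M ** X = X \<and>
                    transpose (M ** X) = M ** X \<and> transpose (X ** M) = X ** M)"

definition col_range :: "real^'b^'a \<Rightarrow> (real^'a) set" where
  "col_range M = range (\<lambda>x. M *v x)"

definition sketch_H :: "real^'n^'m \<Rightarrow> real^'t^'n \<Rightarrow> real^'n^'n" where
  "sketch_H A S = S ** pinv (transpose S ** transpose A ** A ** transpose A ** A ** S) ** transpose S"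

primrec pinv_iter :: "real^'n^'m \<Rightarrow> real^'m^'n \<Rightarrow> nat \<Rightarrow> (nat \<Rightarrow> real^'t^'n) \<Rightarrow> real^'m^'n" where
  "pinv_iter A X0 0 \<omega> = X0"
| "pinv_iter A X0 (Suc k) \<omega> =
     pinv_iter A X0 k \<omega>
     - transpose A ** A ** \<omega> k
       ** pinv (transpose (\<omega> k) ** transpose A ** A ** transpose A ** A ** \<omega> k)
       ** transpose (\<omega> k) ** transpose A ** (A ** pinv_iter A X0 k \<omega> - mat 1)"

definition mat_eigenvalues :: "real^'n^'n \<Rightarrow> real set" where
  "mat_eigenvalues G = {c. \<exists>v. v \<noteq> 0 \<and> G *v v = c *\<^sub>R v}"

definition lambda_min_plus :: "real^'n^'n \<Rightarrow> real" where
  "lambda_min_plus G = Min (mat_eigenvalues G - {0})"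

definition pos_def :: "real^'n^'n \<Rightarrow> bool" where
  "pos_def M \<longleftrightarrow> transpose M = M \<and> (\<forall>x. x \<noteq> 0 \<longrightarrow> x \<bullet> (M *v x) > 0)"

end

theory Submission
  imports Defs
begin


declare transpose_matrix_vector[simp del]

lemma adj: fixes A :: "real^'n^'m" shows "inner (transpose A *v x) y = inner x (A *v y)"
  by (simp only: transpose_matrix_vector dot_lmul_matrix)

lemma entry_inner: fixes A :: "real^'n^'m" shows "inner (A *v axis j 1) (axis i 1) = A$i$j"
  by (simp add: matrix_vector_mult_basis column_def inner_axis)

lemma sym_iff: fixes C :: "real^'n^'n"
  shows "transpose C = C \<longleftrightarrow> (\<forall>x y. inner (C *v x) y = inner x (C *v y))"
proof
  assume "transpose C = C" then show "\<forall>x y. inner (C *v x) y = inner x (C *v y)"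
    using adj[of C] by simp
next
  assume h: "\<forall>x y. inner (C *v x) y = inner x (C *v y)"
  show "transpose C = C"
  proof -
   have "transpose C $ i $ j = C $ i $ j" for i j
   proof -
    have "transpose C $ i $ j = C $ j $ i" by (simp add: transpose_def)
    also have "\<dots> = inner (C *v axis i 1) (axis j 1)" by (simp add: entry_inner)
    also have "\<dots> = inner (axis i 1) (C *v axis j 1)" by (rule h[rule_format])
    also have "\<dots> = C $ i $ j" using entry_inner[of C j i] by (simp add: inner_commute)
    finally show "transpose C $ i $ j = C $ i $ j" .
  qed
  then show ?thesis by (simp add: vec_eq_iff)
  qed
qed

definition proj :: "'a::euclidean_space set \<Rightarrow> 'a \<Rightarrow> 'a" where
  "proj W y = (THE p. p \<in> W \<and> (\<forall>w\<in>W. inner (y - p) w = 0))"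

lemma proj_ex1:
  fixes W :: "'a::euclidean_space set"
  assumes "subspace W"
  shows "\<exists>!p. p \<in> W \<and> (\<forall>w\<in>W. inner (y - p) w = 0)"
proof -
  obtain y1 z where "y1 \<in> span W" "\<And>w. w \<in> span W \<Longrightarrow> orthogonal z w" "y = y1 + z"
    using orthogonal_subspace_decomp_exists by blast
  moreover have "span W = W" using assms by (simp add: span_eq_iff)
  ultimately have ex: "y1 \<in> W \<and> (\<forall>w\<in>W. inner (y - y1) w = 0)"
    by (auto simp: orthogonal_def)
  show ?thesis
  proof (rule ex1I[of _ y1])
    show "y1 \<in> W \<and> (\<forall>w\<in>W. inner (y - y1) w = 0)" by (rule ex)
  next
    fix p assume p: "p \<in> W \<and> (\<forall>w\<in>W. inner (y - p) w = 0)"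
    have d: "p - y1 \<in> W" using p ex assms by (simp add: subspace_diff)
    have "inner (p - y1) (p - y1) = inner (y - y1) (p - y1) - inner (y - p) (p - y1)"
      by (simp add: inner_diff_left)
    also have "\<dots> = 0" using p ex d by simp
    finally show "p = y1" by simp
  qed
qed

lemma proj_props:
  fixes W :: "'a::euclidean_space set"
  assumes "subspace W"
  shows "proj W y \<in> W" "\<And>w. w \<in> W \<Longrightarrow> inner (y - proj W y) w = 0"
proof -
  have "proj W y \<in> W \<and> (\<forall>w\<in>W. inner (y - proj W y) w = 0)"
    unfolding proj_def by (rule theI'[OF proj_ex1[OF assms]])
  then show "proj W y \<in> W" "\<And>w. w \<in> W \<Longrightarrow> inner (y - proj W y) w = 0" by blast+
qed

lemma proj_unique:
  fixes W :: "'a::euclidean_space set"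
  assumes "subspace W" "p \<in> W" "\<And>w. w \<in> W \<Longrightarrow> inner (y - p) w = 0"
  shows "proj W y = p"
  unfolding proj_def by (rule the1_equality[OF proj_ex1[OF assms(1)]]) (use assms(2,3) in blast)

lemma proj_id: "subspace W \<Longrightarrow> x \<in> W \<Longrightarrow> proj W x = x"
  by (rule proj_unique) auto

lemma proj_sym:
  fixes W :: "'a::euclidean_space set"
  assumes "subspace W"
  shows "inner (proj W y) z = inner y (proj W z)"
proof -
  have "inner (y - proj W y) (proj W z) = 0" "inner (z - proj W z) (proj W y) = 0"
    using proj_props[OF assms] by auto
  then have "inner (proj W y) (proj W z) = inner y (proj W z)" "inner (proj W z) (proj W y) = inner z (proj W y)"
    by (simp_all add: inner_diff_left inner_diff_right)
  then show ?thesis by (simp add: inner_commute)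
qed

lemma proj_linear:
  fixes W :: "'a::euclidean_space set"
  assumes "subspace W"
  shows "linear (proj W)"
proof (rule linearI)
  fix x y
  show "proj W (x + y) = proj W x + proj W y"
  proof (rule proj_unique[OF assms])
    show "proj W x + proj W y \<in> W" using proj_props(1)[OF assms] assms by (simp add: subspace_add)
    fix w assume w: "w \<in> W"
    have "inner (x + y - (proj W x + proj W y)) w = inner (x - proj W x) w + inner (y - proj W y) w"
      by (simp add: inner_diff_left inner_add_left)
    then show "inner (x + y - (proj W x + proj W y)) w = 0" using proj_props(2)[OF assms w] by simp
  qed
next
  fix c :: real and x
  show "proj W (c *\<^sub>R x) = c *\<^sub>R proj W x"
  proof (rule proj_unique[OF assms])
    show "c *\<^sub>R proj W x \<in> W" using proj_props(1)[OF assms] assms by (simp add: subspace_scale)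
    fix w assume w: "w \<in> W"
    have "inner (c *\<^sub>R x - c *\<^sub>R proj W x) w = c * inner (x - proj W x) w"
      by (simp add: inner_diff_left right_diff_distrib)
    then show "inner (c *\<^sub>R x - c *\<^sub>R proj W x) w = 0" using proj_props(2)[OF assms w] by simp
  qed
qed


lemma orth_ker:
  fixes M :: "real^'b^'a"
  assumes "\<And>z. inner x (transpose M *v z) = 0"
  shows "M *v x = 0"
proof -
  have "inner (M *v x) (M *v x) = inner (transpose M *v (M *v x)) x" by (rule adj[symmetric])
  also have "\<dots> = 0" using assms[of "M *v x"] by (simp add: inner_commute)
  finally show ?thesis by simp
qed

lemma subspace_range_mat: "subspace (range (\<lambda>x. (M::real^'b^'a) *v x))"
  by (rule linear_subspace_image[OF matrix_vector_mul_linear subspace_UNIV])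

lemma range_T_inj:
  fixes M :: "real^'b^'a"
  assumes "x \<in> range (\<lambda>z. transpose M *v z)" "x' \<in> range (\<lambda>z. transpose M *v z)" "M *v x = M *v x'"
  shows "x = x'"
proof -
  have "x - x' \<in> range (\<lambda>z. transpose M *v z)"
    by (rule subspace_diff[OF subspace_range_mat assms(1,2)])
  then obtain z where z: "x - x' = transpose M *v z" by blast
  have "inner (x - x') (x - x') = inner z (M *v (x - x'))" by (simp add: z adj)
  also have "\<dots> = 0" using assms(3) by (simp add: matrix_vector_mult_diff_distrib)
  finally show ?thesis by simp
qed

lemma proj_RT_same:
  fixes M :: "real^'b^'a"
  shows "M *v proj (range (\<lambda>z. transpose M *v z)) v = M *v v"
proof -
  let ?W = "range (\<lambda>z. transpose M *v z)"
  have "M *v (v - proj ?W v) = 0"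
  proof (rule orth_ker)
    fix z show "inner (v - proj ?W v) (transpose M *v z) = 0"
      using proj_props(2)[OF subspace_range_mat] by blast
  qed
  then show ?thesis by (simp add: matrix_vector_mult_diff_distrib)
qed

lemma pinv_exists:
  fixes M :: "real^'b^'a"
  shows "\<exists>X. M ** X ** M = M \<and> X ** M ** X = X \<and> transpose (M ** X) = M ** X \<and> transpose (X ** M) = X ** M"
proof -
  let ?RT = "range (\<lambda>z. transpose M *v z)" and ?RM = "range (\<lambda>z. M *v z)"
  have sT: "subspace ?RT" and sM: "subspace ?RM" by (rule subspace_range_mat)+
  have ex1: "\<exists>!x. x \<in> ?RT \<and> M *v x = proj ?RM y" for y
  proof -
    obtain v where v: "proj ?RM y = M *v v" using proj_props(1)[OF sM, of y] by blast
    show ?thesis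
    proof (rule ex1I[of _ "proj ?RT v"])
      show "proj ?RT v \<in> ?RT \<and> M *v proj ?RT v = proj ?RM y"
        by (simp only: v proj_RT_same proj_props(1)[OF sT] simp_thms)
    next
      fix x assume x: "x \<in> ?RT \<and> M *v x = proj ?RM y"
      have "M *v x = M *v proj ?RT v" using x by (simp only: v proj_RT_same)
      then show "x = proj ?RT v"
        using range_T_inj[of x M "proj ?RT v"] proj_props(1)[OF sT] x by blast
    qed
  qed
  define g where "g y = (THE x. x \<in> ?RT \<and> M *v x = proj ?RM y)" for y
  have g: "g y \<in> ?RT" "M *v g y = proj ?RM y" for y
  proof -
    have "g y \<in> ?RT \<and> M *v g y = proj ?RM y"
      unfolding g_def by (rule theI'[OF ex1[of y]])
    then show "g y \<in> ?RT" "M *v g y = proj ?RM y" by blast+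
  qed
  have g_char: "x \<in> ?RT \<Longrightarrow> M *v x = proj ?RM y \<Longrightarrow> g y = x" for x y
    using ex1[of y] g[of y] by blast
  have plin: "linear (proj ?RM)" by (rule proj_linear[OF sM])
  have "linear g"
  proof (rule linearI)
    fix x y show "g (x + y) = g x + g y"
      apply (rule g_char)
      using g sT apply (simp add: subspace_add)
      using g linear_add[OF plin] by (simp add: matrix_vector_right_distrib)
  next
    fix c :: real and x show "g (c *\<^sub>R x) = c *\<^sub>R g x"
      apply (rule g_char)
      using g sT apply (simp add: subspace_scale)
      using g linear_scale[OF plin] by (simp add: matrix_vector_mult_scaleR)
  qed
  define X where "X = matrix g"
  have X: "X *v y = g y" for y
  proof -
    have "(\<lambda>y. matrix g *v y) = g" by (rule matrix_vector_mul(2)[OF \<open>linear g\<close>])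
    then show ?thesis unfolding X_def by (simp add: fun_eq_iff)
  qed
  have gM: "g (M *v v) = proj ?RT v" for v
    by (rule g_char) (use proj_props(1)[OF sT] proj_RT_same proj_id[OF sM] in auto)
  have gp: "g (proj ?RM y) = g y" for y
    by (rule g_char) (use g proj_id[OF sM] proj_props(1)[OF sM] in auto)
  have c1: "M ** X ** M = M"
    unfolding matrix_eq
    by (simp add: matrix_vector_mul_assoc[symmetric] X gM proj_RT_same)
  have c2: "X ** M ** X = X"
    unfolding matrix_eq
    by (simp add: matrix_vector_mul_assoc[symmetric] X g gp)
  have c3: "transpose (M ** X) = M ** X"
    unfolding sym_iff
    by (simp add: matrix_vector_mul_assoc[symmetric] X g proj_sym[OF sM])
  have c4: "transpose (X ** M) = X ** M"
    unfolding sym_iff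
    by (simp add: matrix_vector_mul_assoc[symmetric] X gM proj_sym[OF sT])
  show ?thesis by (rule exI[of _ X], intro conjI c1 c2 c3 c4)
qed


definition penrose :: "real^'b^'a \<Rightarrow> real^'a^'b \<Rightarrow> bool" where
  "penrose M X \<longleftrightarrow> M ** X ** M = M \<and> X ** M ** X = X \<and> transpose (M ** X) = M ** X \<and> transpose (X ** M) = X ** M"

lemma penrose_left:
  assumes X: "penrose M X" and Y: "penrose M Y"
  shows "X = X ** M ** Y"
proof -
  have h2: "X ** M ** X = X" and h3: "transpose (M ** X) = M ** X"
    using X unfolding penrose_def by auto
  have k1: "M ** Y ** M = M" and k3: "transpose (M ** Y) = M ** Y"
    using Y unfolding penrose_def by auto
  have e1: "transpose X ** transpose M = M ** X" using h3 by (simp add: matrix_transpose_mul)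
  have e1': "transpose Y ** transpose M = M ** Y" using k3 by (simp add: matrix_transpose_mul)
  have e2: "transpose M = transpose M ** (transpose Y ** transpose M)"
    using arg_cong[OF k1, of transpose] by (simp add: matrix_transpose_mul)
  have "X = X ** (M ** X)" using h2 by (simp add: matrix_mul_assoc)
  also have "\<dots> = X ** (transpose X ** transpose M)" by (simp only: e1)
  also have "\<dots> = (X ** transpose X) ** transpose M" by (simp only: matrix_mul_assoc)
  also have "\<dots> = (X ** transpose X) ** (transpose M ** (transpose Y ** transpose M))" by (simp only: e2[symmetric])
  also have "\<dots> = (X ** (transpose X ** transpose M)) ** (transpose Y ** transpose M)" by (simp only: matrix_mul_assoc)
  also have "\<dots> = (X ** (M ** X)) ** (M ** Y)" by (simp only: e1 e1')
  also have "\<dots> = (X ** M ** X) ** M ** Y" by (simp only: matrix_mul_assoc)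
  also have "\<dots> = X ** M ** Y" by (simp only: h2)
  finally show ?thesis .
qed

lemma penrose_right:
  assumes X: "penrose M X" and Y: "penrose M Y"
  shows "Y = X ** M ** Y"
proof -
  have h1: "M ** X ** M = M" and h4: "transpose (X ** M) = X ** M"
    using X unfolding penrose_def by auto
  have k2: "Y ** M ** Y = Y" and k4: "transpose (Y ** M) = Y ** M"
    using Y unfolding penrose_def by auto
  have e1: "transpose M ** transpose X = X ** M" using h4 by (simp add: matrix_transpose_mul)
  have e1': "transpose M ** transpose Y = Y ** M" using k4 by (simp add: matrix_transpose_mul)
  have e2: "transpose M = (transpose M ** transpose X) ** transpose M"
    using arg_cong[OF h1, of transpose] by (simp add: matrix_transpose_mul matrix_mul_assoc)
  have "Y = (Y ** M) ** Y" using k2 by simp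
  also have "\<dots> = (transpose M ** transpose Y) ** Y" by (simp only: e1')
  also have "\<dots> = ((transpose M ** transpose X) ** transpose M) ** transpose Y ** Y" by (simp only: e2[symmetric])
  also have "\<dots> = (transpose M ** transpose X) ** (transpose M ** transpose Y) ** Y" by (simp only: matrix_mul_assoc)
  also have "\<dots> = (X ** M) ** (Y ** M) ** Y" by (simp only: e1 e1')
  also have "\<dots> = X ** M ** (Y ** M ** Y)" by (simp only: matrix_mul_assoc)
  also have "\<dots> = X ** M ** Y" by (simp only: k2)
  finally show ?thesis .
qed

lemma penrose_unique: "penrose M X \<Longrightarrow> penrose M Y \<Longrightarrow> X = Y"
  using penrose_left[of M X Y] penrose_right[of M X Y] by simp

lemma pinv_penrose: "penrose M (pinv M)"
proof -
  have ex: "\<exists>!X. penrose M X"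
    using pinv_exists[of M] penrose_unique[of M] unfolding penrose_def[symmetric] by blast
  show ?thesis unfolding pinv_def penrose_def[symmetric] by (rule theI'[OF ex])
qed

lemma pinv_props:
  "M ** pinv M ** M = M" "pinv M ** M ** pinv M = pinv M"
  "transpose (M ** pinv M) = M ** pinv M" "transpose (pinv M ** M) = pinv M ** M"
  using pinv_penrose[of M] unfolding penrose_def by auto

lemma pinv_sym:
  fixes M :: "real^'n^'n"
  assumes "transpose M = M"
  shows "transpose (pinv M) = pinv M"
proof -
  let ?X = "pinv M" let ?Z = "transpose (pinv M)"
  note p = pinv_props[of M]
  have "penrose M ?Z" unfolding penrose_def
  proof (intro conjI)
    have "M ** ?Z ** M = transpose (transpose M ** ?X ** transpose M)"
      by (simp add: matrix_transpose_mul matrix_mul_assoc)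
    also have "\<dots> = M" using p(1) assms by simp
    finally show "M ** ?Z ** M = M" .
    have "?Z ** M ** ?Z = transpose (?X ** transpose M ** ?X)"
      by (simp add: matrix_transpose_mul matrix_mul_assoc)
    also have "\<dots> = ?Z" using p(2) assms by simp
    finally show "?Z ** M ** ?Z = ?Z" .
    have "M ** ?Z = transpose (?X ** transpose M)" by (simp add: matrix_transpose_mul)
    also have "\<dots> = ?X ** M" using p(4) assms by simp
    finally have a: "M ** ?Z = ?X ** M" .
    show "transpose (M ** ?Z) = M ** ?Z" unfolding a using p(4) by simp
    have "?Z ** M = transpose (transpose M ** ?X)" by (simp add: matrix_transpose_mul)
    also have "\<dots> = M ** ?X" using p(3) assms by simp
    finally have b: "?Z ** M = M ** ?X" .
    show "transpose (?Z ** M) = ?Z ** M" unfolding b using p(3) by simp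
  qed
  then show ?thesis using penrose_unique[OF _ pinv_penrose] by blast
qed



lemma tDD0:
  fixes D :: "real^'b^'a"
  assumes "transpose D ** D = 0"
  shows "D = 0"
proof -
  have "D *v x = 0" for x
  proof -
    have "inner (D *v x) (D *v x) = inner x (transpose D *v (D *v x))" by (rule adj[symmetric, THEN trans, OF inner_commute])
    also have "\<dots> = 0" using assms by (simp add: matrix_vector_mul_assoc)
    finally show ?thesis by simp
  qed
  then show ?thesis by (simp add: matrix_eq)
qed

lemma projB:
  fixes B :: "real^'t^'n"
  defines "P \<equiv> B ** pinv (transpose B ** B) ** transpose B"
  shows "transpose P = P" "P ** P = P" "P ** B = B"
proof -
  let ?G = "transpose B ** B"
  have Gs: "transpose ?G = ?G" by (simp add: matrix_transpose_mul)
  have ps: "transpose (pinv ?G) = pinv ?G" by (rule pinv_sym[OF Gs])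
  show "transpose P = P" unfolding P_def by (simp add: matrix_transpose_mul matrix_mul_assoc ps)
  have "P ** P = B ** (pinv ?G ** ?G ** pinv ?G) ** transpose B"
    unfolding P_def by (simp add: matrix_mul_assoc)
  then show "P ** P = P" unfolding P_def by (simp add: pinv_props)
  have "B *v (pinv ?G *v (?G *v x)) = B *v x" for x
  proof -
    let ?u = "pinv ?G *v (?G *v x) - x"
    have "?G *v (pinv ?G *v (?G *v x)) = (?G ** pinv ?G ** ?G) *v x" by (simp only: matrix_vector_mul_assoc matrix_mul_assoc)
    then have Gu: "?G *v ?u = 0"
      using pinv_props(1)[of ?G] by (simp add: matrix_vector_mult_diff_distrib)
    have "inner (B *v ?u) (B *v ?u) = inner (transpose B *v (B *v ?u)) ?u"
      by (rule adj[symmetric])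
    also have "\<dots> = inner (?G *v ?u) ?u" by (simp only: matrix_vector_mul_assoc)
    also have "\<dots> = inner ?u (?G *v ?u)" by (rule inner_commute)
    also have "\<dots> = 0" by (simp only: Gu inner_zero_right)
    finally have "B *v ?u = 0" by simp
    then show ?thesis by (simp add: matrix_vector_mult_diff_distrib)
  qed
  then show "P ** B = B" unfolding P_def matrix_eq by (simp add: matrix_vector_mul_assoc[symmetric])
qed

definition Pm :: "real^'n^'m \<Rightarrow> real^'t^'n \<Rightarrow> real^'n^'n" where
  "Pm A S = transpose A ** A ** sketch_H A S ** transpose A ** A"

lemma Pm_eq: "Pm A S = (transpose A ** A ** S) ** pinv (transpose (transpose A ** A ** S) ** (transpose A ** A ** S)) ** transpose (transpose A ** A ** S)"
  unfolding Pm_def sketch_H_def by (simp add: matrix_mul_assoc matrix_transpose_mul)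

lemma Pm_props:
  "transpose (Pm A S) = Pm A S" "Pm A S ** Pm A S = Pm A S"
  "Pm A S ** (transpose A ** A ** S) = transpose A ** A ** S"
  using projB[of "transpose A ** A ** S"] unfolding Pm_eq[symmetric] by auto

lemma Pm_range: "Pm A S = transpose A ** A ** (sketch_H A S ** transpose A ** A)"
  unfolding Pm_def by (simp add: matrix_mul_assoc)

lemma AtAApinv: "transpose A ** A ** pinv A = transpose A"
proof -
  have "transpose A ** A ** pinv A = transpose A ** transpose (A ** pinv A)"
    by (simp add: pinv_props(3) matrix_mul_assoc)
  also have "\<dots> = transpose (A ** pinv A ** A)" by (simp add: matrix_transpose_mul matrix_mul_assoc)
  also have "\<dots> = transpose A" by (simp add: pinv_props(1))
  finally show ?thesis .
qed

lemma iter_step: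
  "pinv_iter A X0 (Suc k) \<omega> - pinv A = (mat 1 - Pm A (\<omega> k)) ** (pinv_iter A X0 k \<omega> - pinv A)"
proof -
  let ?X = "pinv_iter A X0 k \<omega>" and ?S = "\<omega> k"
  have "transpose A ** (A ** ?X - mat 1) = transpose A ** A ** (?X - pinv A)"
  proof -
    have f: "transpose A *v (A *v (pinv A *v v)) = transpose A *v v" for v
      using AtAApinv[of A] by (simp add: matrix_vector_mul_assoc matrix_mul_assoc)
    show ?thesis unfolding matrix_eq
      by (simp add: matrix_vector_mul_assoc[symmetric] matrix_vector_mult_diff_rdistrib
         matrix_vector_mult_diff_distrib f)
  qed
  then have e: "transpose A ** A ** ?S ** pinv (transpose ?S ** transpose A ** A ** transpose A ** A ** ?S)
       ** transpose ?S ** transpose A ** (A ** ?X - mat 1) = Pm A ?S ** (?X - pinv A)"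
    unfolding Pm_def sketch_H_def by (simp add: matrix_mul_assoc[symmetric])
  have d: "(mat 1 - P) ** R = R - P ** R" for P :: "real^'n^'n" and R :: "real^'m^'n"
    unfolding matrix_eq by (simp add: matrix_vector_mul_assoc[symmetric] matrix_vector_mult_diff_rdistrib)
  show ?thesis by (simp add: d e algebra_simps)
qed



lemma norm2_mat: fixes M :: "real^'m^'n" shows "(norm M)^2 = (\<Sum>i\<in>UNIV. \<Sum>j\<in>UNIV. (M$i$j)^2)"
  unfolding power2_norm_eq_inner by (simp add: inner_vec_def power2_eq_square)

lemma norm2_vec: fixes v :: "real^'n" shows "(norm v)^2 = (\<Sum>i\<in>UNIV. (v$i)^2)"
  unfolding power2_norm_eq_inner by (simp add: inner_vec_def power2_eq_square)

lemma norm2_cols: fixes M :: "real^'m^'n" shows "(norm M)^2 = (\<Sum>j\<in>UNIV. (norm (column j M))^2)"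
  unfolding norm2_mat norm2_vec column_def by (simp add: sum.swap[of "\<lambda>i j. (M $ i $ j)^2" UNIV UNIV])

lemma column_mult: "column j (P ** R) = P *v column j R"
  by (simp add: column_def matrix_matrix_mult_def matrix_vector_mult_def vec_eq_iff)

lemma symidem:
  fixes P :: "real^'n^'n"
  assumes s: "transpose P = P" and i: "P ** P = P"
  shows "inner r (P *v r) = (norm (P *v r))^2"
    and "(norm ((mat 1 - P) *v r))^2 = (norm r)^2 - inner r (P *v r)"
    and "norm (P *v r) \<le> norm r"
    and "inner r (P *v r) \<le> (norm r)^2"
    and "0 \<le> inner r (P *v r)"
proof -
  have "inner r (P *v r) = inner r (P *v (P *v r))" by (simp add: matrix_vector_mul_assoc i)
  also have "\<dots> = inner (transpose P *v r) (P *v r)" by (rule adj[symmetric])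
  also have "\<dots> = (norm (P *v r))^2" by (simp add: s power2_norm_eq_inner)
  finally show a: "inner r (P *v r) = (norm (P *v r))^2" .
  have "(norm ((mat 1 - P) *v r))^2 = inner (r - P *v r) (r - P *v r)"
    by (simp add: power2_norm_eq_inner matrix_vector_mult_diff_rdistrib)
  also have "\<dots> = inner r r - 2 * inner r (P *v r) + inner (P *v r) (P *v r)"
    by (simp add: inner_diff_left inner_diff_right inner_commute[of "P *v r" r])
  also have "\<dots> = (norm r)^2 - inner r (P *v r)"
    using a by (simp add: power2_norm_eq_inner)
  finally show "(norm ((mat 1 - P) *v r))^2 = (norm r)^2 - inner r (P *v r)" .
  have "(norm (P *v r))^2 \<le> norm r * norm (P *v r)"
    using a Cauchy_Schwarz_ineq2[of r "P *v r"] by simp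
  then show b: "norm (P *v r) \<le> norm r"
    by (cases "norm (P *v r) = 0") (auto simp: power2_eq_square mult_le_cancel_right)
  show "inner r (P *v r) \<le> (norm r)^2" using a b by (simp add: power_mono)
  show "0 \<le> inner r (P *v r)" using a by simp
qed

lemma entry_bound:
  fixes P :: "real^'n^'n"
  assumes "transpose P = P" "P ** P = P"
  shows "\<bar>P$a$b\<bar> \<le> 1"
proof -
  have "\<bar>P$a$b\<bar> = \<bar>inner (P *v axis b 1) (axis a 1)\<bar>" by (simp add: entry_inner)
  also have "\<dots> \<le> norm (P *v axis b 1) * norm (axis a (1::real))" by (rule Cauchy_Schwarz_ineq2)
  also have "\<dots> \<le> 1"
    using symidem(3)[OF assms, of "axis b 1"] by simp
  finally show ?thesis .
qed

lemma norm2_Q_mul: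
  fixes P :: "real^'n^'n" and R :: "real^'m^'n"
  assumes "transpose P = P" "P ** P = P"
  shows "(norm ((mat 1 - P) ** R))^2 = (norm R)^2 - (\<Sum>j\<in>UNIV. \<Sum>a\<in>UNIV. \<Sum>b\<in>UNIV. P$a$b * (R$a$j * R$b$j))"
proof -
  have "(norm ((mat 1 - P) ** R))^2 = (\<Sum>j\<in>UNIV. (norm (column j R))^2 - inner (column j R) (P *v column j R))"
    unfolding norm2_cols[of "(mat 1 - P) ** R"] column_mult symidem(2)[OF assms] ..
  also have "\<dots> = (norm R)^2 - (\<Sum>j\<in>UNIV. inner (column j R) (P *v column j R))"
    by (simp add: sum_subtractf norm2_cols[of R])
  also have "(\<Sum>j\<in>UNIV. inner (column j R) (P *v column j R)) = (\<Sum>j\<in>UNIV. \<Sum>a\<in>UNIV. \<Sum>b\<in>UNIV. P$a$b * (R$a$j * R$b$j))"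
    by (simp add: inner_vec_def column_def matrix_vector_mult_def sum_distrib_left mult_ac)
  finally show ?thesis .
qed

lemma norm_Q_mul:
  fixes P :: "real^'n^'n" and R :: "real^'m^'n"
  assumes "transpose P = P" "P ** P = P"
  shows "norm ((mat 1 - P) ** R) \<le> norm R"
proof -
  have "(norm ((mat 1 - P) ** R))^2 = (\<Sum>j\<in>UNIV. (norm (column j R))^2 - inner (column j R) (P *v column j R))"
    unfolding norm2_cols[of "(mat 1 - P) ** R"] column_mult symidem(2)[OF assms] ..
  also have "\<dots> \<le> (\<Sum>j\<in>UNIV. (norm (column j R))^2)"
    using symidem(5)[OF assms] by (intro sum_mono) simp
  also have "\<dots> = (norm R)^2" by (simp add: norm2_cols[of R])
  finally show ?thesis by (rule power2_le_imp_le) simp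
qed



lemma quad_zero:
  fixes a b :: real
  assumes "\<And>t. 0 \<le> a * t + b * t^2"
  shows "a = 0"
proof (rule ccontr)
  assume a: "a \<noteq> 0"
  define c where "c = \<bar>b\<bar> + 1"
  have c: "c > 0" unfolding c_def by simp
  define t where "t = - a / c"
  have "b * t^2 \<le> \<bar>b\<bar> * t^2" by (simp add: mult_right_mono)
  then have "a * t + b * t^2 \<le> a * t + \<bar>b\<bar> * t^2" by simp
  also have "\<dots> = a * t + (c - 1) * t^2" unfolding c_def by simp
  also have "\<dots> = -(a^2) / (c^2)" using c unfolding t_def by (simp add: field_simps power2_eq_square)
  also have "\<dots> < 0" using a c by simp
  finally show False using assms[of t] by simp
qed

lemma sym_inner: fixes G :: "real^'n^'n" assumes "transpose G = G"
  shows "inner u (G *v w) = inner w (G *v u)"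
proof -
  have "inner u (G *v w) = inner (transpose G *v u) w" by (rule adj[symmetric])
  also have "\<dots> = inner w (G *v u)" using assms by (simp add: inner_commute)
  finally show ?thesis .
qed

lemma eig_finite:
  fixes G :: "real^'n^'n"
  assumes s: "transpose G = G"
  shows "finite (mat_eigenvalues G)"
proof -
  let ?E = "mat_eigenvalues G"
  define ev where "ev c = (SOME v. v \<noteq> 0 \<and> G *v v = c *\<^sub>R v)" for c
  have ev: "ev c \<noteq> 0 \<and> G *v ev c = c *\<^sub>R ev c" if "c \<in> ?E" for c
  proof -
    have "\<exists>v. v \<noteq> 0 \<and> G *v v = c *\<^sub>R v" using that unfolding mat_eigenvalues_def by blast
    then show ?thesis unfolding ev_def by (rule someI_ex)
  qed
  have inj: "inj_on ev ?E"
  proof (rule inj_onI)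
    fix c d assume "c \<in> ?E" "d \<in> ?E" "ev c = ev d"
    then have "c *\<^sub>R ev c = d *\<^sub>R ev c" "ev c \<noteq> 0" using ev by metis+
    then show "c = d" by simp
  qed
  have orth: "pairwise orthogonal (ev ` ?E)"
  proof (clarsimp simp: pairwise_def)
    fix c d assume c: "c \<in> ?E" and d: "d \<in> ?E" and ne: "ev c \<noteq> ev d"
    then have cd: "c \<noteq> d" by auto
    have "c * inner (ev c) (ev d) = inner (G *v ev c) (ev d)" using ev[OF c] by simp
    also have "\<dots> = inner (ev d) (G *v ev c)" by (rule inner_commute)
    also have "\<dots> = inner (ev c) (G *v ev d)" by (rule sym_inner[OF s, symmetric])
    also have "\<dots> = d * inner (ev c) (ev d)" using ev[OF d] by simp
    finally have "(c - d) * inner (ev c) (ev d) = 0" by (simp add: algebra_simps)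
    then show "orthogonal (ev c) (ev d)" using cd by (simp add: orthogonal_def)
  qed
  have "0 \<notin> ev ` ?E" using ev by auto
  then have "independent (ev ` ?E)" using pairwise_orthogonal_independent[OF orth] by blast
  then have "finite (ev ` ?E)" using independent_bound by blast
  then show ?thesis using finite_imageD[OF _ inj] by blast
qed

lemma rayleigh:
  fixes G :: "real^'n^'n"
  assumes s: "transpose G = G" and r: "r \<in> range (\<lambda>x. G *v x)" and rne: "r \<noteq> 0"
  shows "\<exists>u. u \<in> range (\<lambda>x. G *v x) \<and> norm u = 1 \<and>
           lambda_min_plus G \<le> inner u (G *v u) \<and>
           inner u (G *v u) * (norm r)^2 \<le> inner r (G *v r)"
proof -
  let ?V = "range (\<lambda>x. G *v x)"
  let ?f = "\<lambda>u. inner u (G *v u)"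
  have sV: "subspace ?V" by (rule subspace_range_mat)
  have cV: "closed ?V" by (rule closed_subspace[OF sV])
  let ?K = "?V \<inter> sphere 0 1"
  have K: "compact ?K" using cV by (intro closed_Int_compact) auto
  have "r /\<^sub>R norm r \<in> ?K" using r rne sV by (simp add: subspace_scale)
  then have Kne: "?K \<noteq> {}" by blast
  have fc: "continuous_on ?K ?f"
    by (intro continuous_intros linear_continuous_on matrix_vector_mul_linear bounded_linear.continuous_on[of "\<lambda>x. G *v x"])
       (auto intro: linear_linear matrix_vector_mul_linear)
  obtain u where u: "u \<in> ?K" and umin: "\<And>y. y \<in> ?K \<Longrightarrow> ?f u \<le> ?f y"
    using continuous_attains_inf[OF K Kne fc] by blast
  define \<mu> where "\<mu> = ?f u"
  have uV: "u \<in> ?V" and un: "norm u = 1" using u by auto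
  have hom: "?f (c *\<^sub>R v) = c^2 * ?f v" for c v
    by (simp add: matrix_vector_mult_scaleR power2_eq_square)
  have low: "\<mu> * (norm v)^2 \<le> ?f v" if "v \<in> ?V" for v
  proof (cases "v = 0")
    case True then show ?thesis by simp
  next
    case False
    have "v /\<^sub>R norm v \<in> ?K" using that False sV by (simp add: subspace_scale)
    then have "\<mu> \<le> ?f (v /\<^sub>R norm v)" using umin unfolding \<mu>_def by blast
    also have "\<dots> = ?f v / (norm v)^2" using hom[of "inverse (norm v)" v]
      by (simp add: power_inverse field_simps)
    finally show ?thesis using False by (simp add: field_simps)
  qed
  have orthw: "inner w (G *v u - \<mu> *\<^sub>R u) = 0" if w: "w \<in> ?V" for w
  proof -
    have "0 \<le> 2 * inner w (G *v u - \<mu> *\<^sub>R u) * t + (?f w - \<mu> * (norm w)^2) * t^2" for t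
    proof -
      have "u + t *\<^sub>R w \<in> ?V" using uV w sV by (simp add: subspace_add subspace_scale)
      then have "\<mu> * (norm (u + t *\<^sub>R w))^2 \<le> ?f (u + t *\<^sub>R w)" by (rule low)
      moreover have "?f (u + t *\<^sub>R w) = ?f u + 2 * t * inner w (G *v u) + t^2 * ?f w"
        by (simp add: sym_inner[OF s, of u w] inner_add_left inner_add_right matrix_vector_right_distrib matrix_vector_mult_scaleR
            power2_eq_square algebra_simps)
      moreover have "(norm (u + t *\<^sub>R w))^2 = inner u u + 2 * t * inner w u + t^2 * inner w w"
        unfolding power2_norm_eq_inner by (simp add: inner_add_left inner_add_right inner_commute[of u w]
            power2_eq_square algebra_simps)
      moreover have "inner u u = 1" "inner w w = (norm w)^2" using un by (simp_all add: power2_norm_eq_inner[symmetric])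
      ultimately show ?thesis unfolding \<mu>_def
        by (simp add: sym_inner[OF s, of u w] inner_diff_right algebra_simps power2_eq_square)
    qed
    then have "2 * inner w (G *v u - \<mu> *\<^sub>R u) = 0"
      by (intro quad_zero[where b="?f w - \<mu> * (norm w)^2"]) (simp add: mult.commute)
    then show ?thesis by simp
  qed
  have "G *v u - \<mu> *\<^sub>R u \<in> ?V" using uV sV by (simp add: subspace_diff subspace_scale)
  from orthw[OF this] have eig: "G *v u = \<mu> *\<^sub>R u" by simp
  have mu0: "\<mu> \<noteq> 0"
  proof
    assume "\<mu> = 0"
    then have Gu: "G *v u = 0" using eig by simp
    obtain y where y: "u = G *v y" using uV by blast
    have "inner u u = inner y (G *v u)" using sym_inner[OF s, of y u] by (simp add: y inner_commute)
    then have "inner u u = 0" using Gu by simp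
    then show False using un by simp
  qed
  have "\<mu> \<in> mat_eigenvalues G - {0}"
    unfolding mat_eigenvalues_def using eig mu0 un by (auto intro!: exI[of _ u])
  then have "lambda_min_plus G \<le> \<mu>"
    unfolding lambda_min_plus_def using eig_finite[OF s] by (intro Min_le) auto
  then show ?thesis using uV un low[OF r] unfolding \<mu>_def by blast
qed



lemma meas_nth[measurable (raw)]:
  fixes f :: "'a \<Rightarrow> 'c::euclidean_space ^'n"
  assumes "f \<in> borel_measurable M"
  shows "(\<lambda>x. f x $ i) \<in> borel_measurable M"
proof -
  have "(\<lambda>v::'c^'n. v $ i) \<in> borel_measurable borel"
    by (intro borel_measurable_continuous_onI continuous_on_component continuous_on_id)
  then show ?thesis using measurable_compose[OF assms] by blast
qed

lemma meas_vecI: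
  fixes f :: "'a \<Rightarrow> 'c::euclidean_space ^'n"
  assumes "\<And>i. (\<lambda>x. f x $ i) \<in> borel_measurable M"
  shows "f \<in> borel_measurable M"
  unfolding borel_measurable_euclidean_space[where f=f]
proof
  fix b :: "'c^'n" assume "b \<in> Basis"
  then obtain i u where b: "b = axis i u" and u: "u \<in> Basis" unfolding Basis_vec_def by blast
  have "(\<lambda>x. inner (f x $ i) u) \<in> borel_measurable M" using assms[of i] by measurable
  then show "(\<lambda>x. inner (f x) b) \<in> borel_measurable M" by (simp add: b inner_axis)
qed

lemma mm_meas[measurable (raw)]:
  fixes F :: "'a \<Rightarrow> real^'k^'n" and G :: "'a \<Rightarrow> real^'m^'k"
  assumes "F \<in> borel_measurable M" "G \<in> borel_measurable M"
  shows "(\<lambda>x. F x ** G x) \<in> borel_measurable M"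
proof (rule meas_vecI, rule meas_vecI)
  fix i j
  have "(\<lambda>x. \<Sum>k\<in>UNIV. F x $ i $ k * G x $ k $ j) \<in> borel_measurable M"
    using assms by measurable
  then show "(\<lambda>x. (F x ** G x) $ i $ j) \<in> borel_measurable M"
    by (simp add: matrix_matrix_mult_def)
qed

lemma mv_meas[measurable (raw)]:
  fixes F :: "'a \<Rightarrow> real^'k^'n" and g :: "'a \<Rightarrow> real^'k"
  assumes "F \<in> borel_measurable M" "g \<in> borel_measurable M"
  shows "(\<lambda>x. F x *v g x) \<in> borel_measurable M"
proof (rule meas_vecI)
  fix i
  have "(\<lambda>x. \<Sum>k\<in>UNIV. F x $ i $ k * g x $ k) \<in> borel_measurable M"
    using assms by measurable
  then show "(\<lambda>x. (F x *v g x) $ i) \<in> borel_measurable M"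
    by (simp add: matrix_vector_mult_def)
qed

lemma tr_meas[measurable (raw)]:
  fixes F :: "'a \<Rightarrow> real^'k^'n"
  assumes "F \<in> borel_measurable M"
  shows "(\<lambda>x. transpose (F x)) \<in> borel_measurable M"
proof (rule meas_vecI, rule meas_vecI)
  fix i j
  have "(\<lambda>x. F x $ j $ i) \<in> borel_measurable M" using assms by measurable
  then show "(\<lambda>x. transpose (F x) $ i $ j) \<in> borel_measurable M"
    by (simp add: transpose_def)
qed

lemma det_meas[measurable (raw)]:
  fixes F :: "'a \<Rightarrow> real^'n^'n"
  assumes "F \<in> borel_measurable M"
  shows "(\<lambda>x. det (F x)) \<in> borel_measurable M"
  unfolding det_def using assms by measurable



lemma scaleR_entry: "((c::real) *\<^sub>R (M::real^'n^'m)) $ i $ j = c * M $ i $ j"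
  by simp

lemma scaleR_mv: "((c::real) *\<^sub>R (M::real^'n^'m)) *v w = c *\<^sub>R (M *v w)"
  unfolding vec_eq_iff matrix_vector_mult_def
  by (simp only: scaleR_entry vector_scaleR_component vec_lambda_beta real_scaleR_def sum_distrib_left mult.assoc simp_thms)

lemma approx_core:
  fixes B :: "real^'t^'n" and x u :: "real^'n" and \<delta> :: real
  assumes d: "\<delta> > 0"
  and eq: "(B ** transpose B + \<delta> *\<^sub>R mat 1) *v u = (B ** transpose B) *v x"
  shows "norm (u - (B ** pinv (transpose B ** B) ** transpose B) *v x)
           \<le> sqrt \<delta> * norm ((pinv (transpose B ** B) ** transpose B) *v x)"
proof -
  let ?P = "B ** pinv (transpose B ** B) ** transpose B"
  let ?K = "pinv (transpose B ** B) ** transpose B"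
  define v where "v = ?K *v x"
  define y where "y = ?P *v x"
  have yBv: "y = B *v v" unfolding y_def v_def by (simp add: matrix_vector_mul_assoc matrix_mul_assoc)
  have ps: "transpose ?P = ?P" "?P ** B = B" using projB[of B] by auto
  have BtP: "transpose B ** ?P = transpose B"
  proof -
    have "transpose B ** ?P = transpose B ** transpose ?P" by (simp only: ps(1))
    also have "\<dots> = transpose (?P ** B)" by (rule matrix_transpose_mul[symmetric])
    also have "\<dots> = transpose B" by (simp only: ps(2))
    finally show ?thesis .
  qed
  have Hy: "B *v (transpose B *v y) = B *v (transpose B *v x)"
  proof -
    have "transpose B *v y = transpose B *v x" unfolding y_def
      by (simp only: matrix_vector_mul_assoc BtP)
    then show ?thesis by simp
  qed
  define w where "w = u - y"
  define z where "z = transpose B *v w"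
  have eqw: "B *v (transpose B *v w) + \<delta> *\<^sub>R w = - (\<delta> *\<^sub>R y)"
  proof -
    have "B *v (transpose B *v u) + \<delta> *\<^sub>R u = B *v (transpose B *v x)"
      using eq by (simp add: matrix_vector_mult_add_rdistrib matrix_vector_mul_assoc scaleR_mv)
    then show ?thesis unfolding w_def
      by (simp add: matrix_vector_mult_diff_distrib Hy algebra_simps)
  qed
  have i1: "inner w (B *v (transpose B *v w)) = inner z z"
    unfolding z_def by (rule adj[symmetric])
  have i2: "inner w y = inner z v" unfolding yBv z_def by (rule adj[symmetric])
  have key: "inner z z + \<delta> * inner w w = - \<delta> * inner z v"
  proof -
    have "inner w (B *v (transpose B *v w) + \<delta> *\<^sub>R w) = inner w (- (\<delta> *\<^sub>R y))" by (simp only: eqw)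
    then show ?thesis by (simp add: inner_add_right i1 i2)
  qed
  have cs: "- \<delta> * inner z v \<le> \<delta> * (norm z * norm v)"
  proof -
    have "- inner z v \<le> norm z * norm v" using Cauchy_Schwarz_ineq2[of z v] by simp
    from mult_left_mono[OF this, of \<delta>] show ?thesis using d by simp
  qed
  have zz: "inner z z = (norm z)^2" "inner w w = (norm w)^2" by (simp_all add: power2_norm_eq_inner)
  have ww: "0 \<le> \<delta> * inner w w" using d by simp
  have "(norm z)^2 \<le> \<delta> * (norm z * norm v)" using key cs ww zz by simp
  then have nz: "norm z \<le> \<delta> * norm v"
    using d by (cases "norm z = 0") (auto simp: power2_eq_square mult_le_cancel_right mult_ac intro: mult_nonneg_nonneg)
  have "0 \<le> (norm z)^2" by simp
  moreover have key': "(norm z)^2 + \<delta> * (norm w)^2 = - \<delta> * inner z v" using key zz by simp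
  ultimately have "\<delta> * (norm w)^2 \<le> \<delta> * (norm z * norm v)" using cs by linarith
  also have "\<dots> \<le> \<delta> * ((\<delta> * norm v) * norm v)"
    by (rule mult_left_mono[OF mult_right_mono[OF nz norm_ge_zero]]) (use d in simp)
  finally have "(norm w)^2 \<le> \<delta> * (norm v)^2" using d by (simp add: power2_eq_square mult_ac)
  also have "\<dots> = (sqrt \<delta> * norm v)^2" using d by (simp add: power_mult_distrib)
  finally have "norm w \<le> sqrt \<delta> * norm v" by (rule power2_le_imp_le) (use d in simp)
  then show ?thesis unfolding w_def y_def v_def .
qed

lemma det_pos_nz:
  fixes B :: "real^'t^'n"
  assumes d: "\<delta> > 0"
  shows "det (B ** transpose B + \<delta> *\<^sub>R mat 1) \<noteq> 0"
proof -
  let ?M = "B ** transpose B + \<delta> *\<^sub>R mat 1"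
  have "inj (\<lambda>x. ?M *v x)"
  proof (rule linear_injective_0[THEN iffD2])
    show "linear (\<lambda>x. ?M *v x)" by (rule matrix_vector_mul_linear)
    show "\<forall>x. ?M *v x = 0 \<longrightarrow> x = 0"
    proof (intro allI impI)
      fix w assume h: "?M *v w = 0"
      have "B *v (transpose B *v w) + \<delta> *\<^sub>R w = 0"
        using h by (simp add: matrix_vector_mult_add_rdistrib matrix_vector_mul_assoc scaleR_mv)
      then have "inner w (B *v (transpose B *v w) + \<delta> *\<^sub>R w) = 0" by simp
      moreover have "inner w (B *v (transpose B *v w)) = inner (transpose B *v w) (transpose B *v w)"
        by (rule adj[symmetric])
      ultimately have "inner (transpose B *v w) (transpose B *v w) + \<delta> * inner w w = 0"
        by (simp add: inner_add_right)
      moreover have "0 \<le> inner (transpose B *v w) (transpose B *v w)" by simp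
      moreover have "0 \<le> \<delta> * inner w w" using d by simp
      ultimately have "\<delta> * inner w w = 0" by linarith
      then show "w = 0" using d by simp
    qed
  qed
  then show ?thesis using det_nz_iff_inj[of "\<lambda>x. ?M *v x"] matrix_vector_mul_linear by simp
qed

lemma Pm_meas_borel:
  fixes A :: "real^'n^'m"
  shows "(\<lambda>S::real^'t^'n. Pm A S) \<in> borel_measurable borel"
proof -
  let ?B = "\<lambda>S::real^'t^'n. transpose A ** A ** S"
  let ?H = "\<lambda>S. ?B S ** transpose (?B S)"
  define d where "d j = inverse (real (Suc j))" for j
  define M where "M j S = ?H S + d j *\<^sub>R mat 1" for j S
  have dpos: "d j > 0" for j unfolding d_def by simp
  have Pv: "(\<lambda>S::real^'t^'n. Pm A S *v x) \<in> borel_measurable borel" for x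
  proof -
    define U where "U j S = (\<chi> k. det (\<chi> i l. if l = k then (?H S *v x) $ i else M j S $ i $ l) / det (M j S))" for j S
    have Um: "U j \<in> borel_measurable borel" for j
    proof (rule meas_vecI)
      fix k
      have "(\<lambda>S. (\<chi> i l. if l = k then (?H S *v x) $ i else M j S $ i $ l)) \<in> borel_measurable borel"
      proof (rule meas_vecI, rule meas_vecI)
        fix i l
        show "(\<lambda>S. (\<chi> i l. if l = k then (?H S *v x) $ i else M j S $ i $ l) $ i $ l) \<in> borel_measurable borel"
          unfolding M_def by simp measurable
      qed
      moreover have "(\<lambda>S. M j S) \<in> borel_measurable borel" unfolding M_def by measurable
      ultimately show "(\<lambda>S. U j S $ k) \<in> borel_measurable borel"
        unfolding U_def by simp measurable
    qed
    have sol: "M j S *v U j S = ?H S *v x" for j S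
      using cramer[OF det_pos_nz[OF dpos, of "?B S"], where x="U j S" and b="?H S *v x"]
      unfolding U_def M_def by simp
    have lim: "(\<lambda>j. U j S) \<longlonglongrightarrow> Pm A S *v x" for S
    proof -
      let ?c = "norm ((pinv (transpose (?B S) ** ?B S) ** transpose (?B S)) *v x)"
      have bound: "norm (U j S - Pm A S *v x) \<le> sqrt (d j) * ?c" for j
        unfolding Pm_eq by (rule approx_core[OF dpos]) (use sol[of j S] in \<open>simp add: M_def\<close>)
      have "(\<lambda>j. sqrt (d j) * ?c) \<longlonglongrightarrow> sqrt 0 * ?c"
        unfolding d_def by (intro tendsto_intros LIMSEQ_inverse_real_of_nat)
      then have "(\<lambda>j. U j S - Pm A S *v x) \<longlonglongrightarrow> 0"
        by (intro Lim_null_comparison[OF always_eventually[OF allI[OF bound]]]) simp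
      then show ?thesis by (simp add: Lim_null[symmetric])
    qed
    show ?thesis
      apply (rule borel_measurable_LIMSEQ_metric[of U])
       apply (rule Um)
      apply (rule lim)
      done
  qed
  show ?thesis
  proof (rule meas_vecI, rule meas_vecI)
    fix a b
    have "(\<lambda>S::real^'t^'n. (Pm A S *v axis b 1) $ a) \<in> borel_measurable borel" by (rule meas_nth[OF Pv])
    then show "(\<lambda>S::real^'t^'n. Pm A S $ a $ b) \<in> borel_measurable borel"
      by (simp add: matrix_vector_mult_basis column_def)
  qed
qed



lemma indep_int:
  fixes D :: "'a measure" and f :: "'a \<Rightarrow> real" and g :: "(nat \<Rightarrow> 'a) \<Rightarrow> real"
  assumes D: "prob_space D"
    and f: "f \<in> borel_measurable D" "\<And>s. \<bar>f s\<bar> \<le> cf"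
    and g: "g \<in> borel_measurable (PiM {..<k} (\<lambda>_. D))" "\<And>\<omega>. \<bar>g \<omega>\<bar> \<le> cg"
  shows "(\<integral>\<omega>. f (\<omega> k) * g (restrict \<omega> {..<k}) \<partial>PiM UNIV (\<lambda>_. D))
         = (\<integral>s. f s \<partial>D) * (\<integral>\<omega>. g (restrict \<omega> {..<k}) \<partial>PiM UNIV (\<lambda>_. D))"
proof -
  have Pps: "product_prob_space (\<lambda>_. D)"
    by (simp add: product_prob_space_def product_prob_space_axioms_def product_sigma_finite_def
          prob_space_imp_sigma_finite D)
  let ?O = "PiM UNIV (\<lambda>_::nat. D)"
  have Op: "prob_space ?O" by (rule prob_space_PiM) (rule D)
  have rv: "(\<lambda>\<omega>. \<omega> i) \<in> measurable ?O D" for i by (rule measurable_component_singleton) simp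
  have e2: "distr ?O D (\<lambda>\<omega>. \<omega> i) = D" for i by (rule product_prob_space.PiM_component[OF Pps]) simp
  have ind: "prob_space.indep_vars ?O (\<lambda>_. D) (\<lambda>i \<omega>. \<omega> i) UNIV"
  proof -
    have e1: "(\<lambda>x. \<lambda>i\<in>UNIV. x i) = (\<lambda>x::nat \<Rightarrow> 'a. x)" by (simp add: fun_eq_iff)
    have "distr ?O (PiM UNIV (\<lambda>_. D)) (\<lambda>x. \<lambda>i\<in>UNIV. x i) = PiM UNIV (\<lambda>i. distr ?O D (\<lambda>\<omega>. \<omega> i))"
      unfolding e1 e2 by (simp add: distr_id)
    then show ?thesis
      using prob_space.indep_vars_iff_distr_eq_PiM[OF Op, where I=UNIV and M'="\<lambda>_. D" and X="\<lambda>i \<omega>. \<omega> i"] rv by simp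
  qed
  have iv: "prob_space.indep_var ?O (PiM {k} (\<lambda>_. D)) (\<lambda>\<omega>. restrict \<omega> {k}) (PiM {..<k} (\<lambda>_. D)) (\<lambda>\<omega>. restrict \<omega> {..<k})"
    using prob_space.indep_var_restrict[OF Op ind, of "{k}" "{..<k}"] by simp
  have f1: "(\<lambda>r. f (r k)) \<in> borel_measurable (PiM {k} (\<lambda>_. D))"
    using measurable_compose[OF measurable_component_singleton[of k "{k}" "\<lambda>_. D"] f(1)] by simp
  have iv2: "prob_space.indep_var ?O borel (\<lambda>\<omega>. f (\<omega> k)) borel (\<lambda>\<omega>. g (restrict \<omega> {..<k}))"
    using prob_space.indep_var_compose[OF Op iv f1 g(1)] by (simp add: comp_def)
  have fm: "(\<lambda>\<omega>. f (\<omega> k)) \<in> borel_measurable ?O"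
    using measurable_compose[OF rv f(1)] .
  have gm: "(\<lambda>\<omega>. g (restrict \<omega> {..<k})) \<in> borel_measurable ?O"
    using measurable_compose[OF measurable_restrict_subset[of "{..<k}" UNIV "\<lambda>_. D"] g(1)] by simp
  have Of: "finite_measure ?O" using Op by (simp add: prob_space_def)
  have fi: "integrable ?O (\<lambda>\<omega>. f (\<omega> k))"
    by (rule finite_measure.integrable_const_bound[OF Of, where B=cf]) (use f(2) fm in auto)
  have gi: "integrable ?O (\<lambda>\<omega>. g (restrict \<omega> {..<k}))"
    by (rule finite_measure.integrable_const_bound[OF Of, where B=cg]) (use g(2) gm in auto)
  have "(\<integral>\<omega>. f (\<omega> k) * g (restrict \<omega> {..<k}) \<partial>?O)
        = (\<integral>\<omega>. f (\<omega> k) \<partial>?O) * (\<integral>\<omega>. g (restrict \<omega> {..<k}) \<partial>?O)"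
    by (rule prob_space.indep_var_lebesgue_integral[OF Op iv2 fi gi])
  moreover have "(\<integral>\<omega>. f (\<omega> k) \<partial>?O) = (\<integral>s. f s \<partial>D)"
  proof -
    have "(\<integral>s. f s \<partial>distr ?O D (\<lambda>\<omega>. \<omega> k)) = (\<integral>\<omega>. f (\<omega> k) \<partial>?O)"
      by (rule integral_distr[OF rv f(1)])
    then show ?thesis by (simp add: e2)
  qed
  ultimately show ?thesis by simp
qed



lemma PmD:
  fixes A :: "real^'n^'m" and D :: "(real^'t^'n) measure"
  assumes sD: "sets D = sets borel"
  shows "(\<lambda>S. Pm A S) \<in> borel_measurable D"
  by (subst measurable_cong_sets[OF sD refl]) (rule Pm_meas_borel)

lemma iter_dep: "(\<forall>j<k. \<omega> j = \<omega>' j) \<Longrightarrow> pinv_iter A X0 k \<omega> = pinv_iter A X0 k \<omega>'"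
  by (induction k) auto

lemma iter_restrict: "pinv_iter A X0 k (restrict \<omega> {..<k}) = pinv_iter A X0 k \<omega>"
  by (rule iter_dep) simp

lemma iter_alt: "pinv_iter A X0 (Suc k) \<omega> = pinv A + (mat 1 - Pm A (\<omega> k)) ** (pinv_iter A X0 k \<omega> - pinv A)"
  using iter_step[of A X0 k \<omega>] by (simp add: algebra_simps)

lemma iter_meas:
  fixes A :: "real^'n^'m" and X0 :: "real^'m^'n" and D :: "(real^'t^'n) measure"
  assumes sD: "sets D = sets borel" and I: "{..<k} \<subseteq> I"
  shows "(\<lambda>\<omega>. pinv_iter A X0 k \<omega>) \<in> borel_measurable (PiM I (\<lambda>_. D))"
  using I
proof (induction k)
  case 0 then show ?case by simp
next
  case (Suc k)
  have kI: "k \<in> I" using Suc.prems by auto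
  have "{..<k} \<subseteq> I" using Suc.prems by auto
  then have IH: "(\<lambda>\<omega>. pinv_iter A X0 k \<omega>) \<in> borel_measurable (PiM I (\<lambda>_. D))" by (rule Suc.IH)
  have Pk: "(\<lambda>\<omega>. Pm A (\<omega> k)) \<in> borel_measurable (PiM I (\<lambda>_. D))"
    using measurable_compose[OF measurable_component_singleton[OF kI] PmD[OF sD, of A]] by simp
  have "(\<lambda>\<omega>. pinv A + (mat 1 - Pm A (\<omega> k)) ** (pinv_iter A X0 k \<omega> - pinv A)) \<in> borel_measurable (PiM I (\<lambda>_. D))"
    using Pk IH by measurable
  then show ?case by (simp only: iter_alt)
qed

lemma iter_norm:
  "norm (pinv_iter A X0 k \<omega> - pinv A) \<le> norm (X0 - pinv A)"
proof (induction k)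
  case 0 then show ?case by simp
next
  case (Suc k)
  have "norm (pinv_iter A X0 (Suc k) \<omega> - pinv A) \<le> norm (pinv_iter A X0 k \<omega> - pinv A)"
    unfolding iter_step by (rule norm_Q_mul[OF Pm_props(1,2)])
  then show ?case using Suc by linarith
qed

lemma iter_range:
  fixes A :: "real^'n^'m" and X0 :: "real^'m^'n"
  assumes "col_range X0 \<subseteq> col_range (transpose A ** A)"
  shows "(pinv_iter A X0 k \<omega> - pinv A) *v x \<in> range (\<lambda>z. (transpose A ** A) *v z)"
proof (induction k arbitrary: x)
  let ?V = "range (\<lambda>z. (transpose A ** A) *v z)"
  have sV: "subspace ?V" by (rule subspace_range_mat)
  case 0
  have "X0 *v x \<in> ?V" using assms unfolding col_range_def by blast
  moreover have "pinv A *v x \<in> ?V"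
  proof -
    have "pinv A = pinv A ** A ** pinv A" by (simp add: pinv_props)
    also have "\<dots> = transpose (pinv A ** A) ** pinv A" by (simp add: pinv_props)
    also have "\<dots> = transpose A ** transpose (pinv A) ** pinv A" by (simp add: matrix_transpose_mul)
    also have "\<dots> = (transpose A ** A) ** (pinv A ** transpose (pinv A) ** pinv A)"
      by (simp add: AtAApinv matrix_mul_assoc)
    finally have "pinv A *v x = (transpose A ** A) *v ((pinv A ** transpose (pinv A) ** pinv A) *v x)"
      by (simp add: matrix_vector_mul_assoc)
    then show ?thesis by blast
  qed
  ultimately show ?case using sV by (simp add: matrix_vector_mult_diff_rdistrib subspace_diff)
next
  let ?V = "range (\<lambda>z. (transpose A ** A) *v z)"
  have sV: "subspace ?V" by (rule subspace_range_mat)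
  case (Suc k)
  let ?R = "pinv_iter A X0 k \<omega> - pinv A"
  have "Pm A (\<omega> k) *v (?R *v x) = (transpose A ** A) *v ((sketch_H A (\<omega> k) ** transpose A ** A) *v (?R *v x))"
    by (simp add: Pm_range matrix_vector_mul_assoc matrix_mul_assoc)
  then have "Pm A (\<omega> k) *v (?R *v x) \<in> ?V" by blast
  then have "?R *v x - Pm A (\<omega> k) *v (?R *v x) \<in> ?V" using Suc sV by (simp add: subspace_diff)
  then show ?case unfolding iter_step
    by (simp add: matrix_vector_mul_assoc[symmetric] matrix_vector_mult_diff_rdistrib)
qed

lemma entry_le_norm: "\<bar>(M::real^'m^'n) $ a $ b\<bar> \<le> norm M"
proof -
  have "\<bar>M $ a $ b\<bar> \<le> norm (M $ a)" by (rule component_le_norm_cart)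
  also have "\<dots> \<le> norm M" by (rule Finite_Cartesian_Product.norm_nth_le)
  finally show ?thesis .
qed

lemma bint:
  fixes f :: "'a \<Rightarrow> 'b::{banach,second_countable_topology}"
  assumes "prob_space M" "f \<in> borel_measurable M" "\<And>x. norm (f x) \<le> c"
  shows "integrable M f"
proof -
  have "finite_measure M" using assms(1) by (simp add: prob_space_def)
  then show ?thesis by (rule finite_measure.integrable_const_bound[where B=c]) (use assms in auto)
qed

lemma int_entry:
  fixes f :: "'a \<Rightarrow> real^'m^'n"
  assumes "integrable M f"
  shows "(\<integral>x. f x \<partial>M) $ i $ j = (\<integral>x. f x $ i $ j \<partial>M)"
proof -
  have i1: "integrable M (\<lambda>x. f x $ i)" by (rule integrable_bounded_linear[OF bounded_linear_vec_nth assms])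
  have "(\<integral>x. f x \<partial>M) $ i = (\<integral>x. f x $ i \<partial>M)"
    by (rule integral_bounded_linear[OF bounded_linear_vec_nth assms, symmetric])
  moreover have "(\<integral>x. f x $ i \<partial>M) $ j = (\<integral>x. f x $ i $ j \<partial>M)"
    by (rule integral_bounded_linear[OF bounded_linear_vec_nth i1, symmetric])
  ultimately show ?thesis by simp
qed



lemma part1:
  fixes A :: "real^'n^'m" and X0 :: "real^'m^'n" and D :: "(real^'t^'n) measure"
  assumes D: "prob_space D" and sD: "sets D = sets borel"
  shows "(\<integral>\<omega>. (pinv_iter A X0 (Suc k) \<omega> - pinv A) \<partial>(PiM UNIV (\<lambda>_. D)))
       = (\<integral>S. (mat 1 - Pm A S) \<partial>D) ** (\<integral>\<omega>. (pinv_iter A X0 k \<omega> - pinv A) \<partial>(PiM UNIV (\<lambda>_. D)))"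
proof -
  let ?O = "PiM UNIV (\<lambda>_::nat. D)"
  let ?R = "\<lambda>k \<omega>. pinv_iter A X0 k \<omega> - pinv A"
  let ?Q = "\<lambda>S. mat 1 - Pm A S"
  define c0 where "c0 = norm (X0 - pinv A)"
  define cq where "cq = norm (mat 1 :: real^'n^'n)"
  have Op: "prob_space ?O" by (rule prob_space_PiM) (rule D)
  have QD: "?Q \<in> borel_measurable D" using PmD[OF sD, of A] by measurable
  have Rm: "?R k \<in> borel_measurable (PiM I (\<lambda>_. D))" if "{..<k} \<subseteq> I" for k I
    using iter_meas[OF sD that, of A X0] by measurable
  have Qb: "norm (?Q S) \<le> cq" for S
    using norm_Q_mul[OF Pm_props(1,2), of A S "mat 1 :: real^'n^'n"] unfolding cq_def by simp
  have Rb: "norm (?R k \<omega>) \<le> c0" for k \<omega> unfolding c0_def by (rule iter_norm)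
  have iQ: "integrable D ?Q" by (rule bint[OF D QD Qb])
  have iR: "integrable ?O (?R k)" for k by (rule bint[OF Op Rm Rb]) simp
  show ?thesis
  proof (subst vec_eq_iff, intro allI, subst vec_eq_iff, intro allI)
    fix i j
    have step: "?R (Suc k) \<omega> $ i $ j = (\<Sum>l\<in>UNIV. ?Q (\<omega> k) $ i $ l * ?R k (restrict \<omega> {..<k}) $ l $ j)" for \<omega>
      unfolding iter_step iter_restrict by (simp add: matrix_matrix_mult_def)
    have trm: "(\<integral>\<omega>. ?Q (\<omega> k) $ i $ l * ?R k (restrict \<omega> {..<k}) $ l $ j \<partial>?O)
          = (\<integral>S. ?Q S $ i $ l \<partial>D) * (\<integral>\<omega>. ?R k \<omega> $ l $ j \<partial>?O)" for l
    proof -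
      have f: "(\<lambda>S. ?Q S $ i $ l) \<in> borel_measurable D" using QD by measurable
      have g: "(\<lambda>\<omega>. ?R k \<omega> $ l $ j) \<in> borel_measurable (PiM {..<k} (\<lambda>_. D))"
        using Rm[of k "{..<k}"] by measurable
      have "(\<integral>\<omega>. ?Q (\<omega> k) $ i $ l * ?R k (restrict \<omega> {..<k}) $ l $ j \<partial>?O)
          = (\<integral>S. ?Q S $ i $ l \<partial>D) * (\<integral>\<omega>. ?R k (restrict \<omega> {..<k}) $ l $ j \<partial>?O)"
        by (rule indep_int[OF D f _ g, where cf=cq and cg=c0])
           (use Qb Rb entry_le_norm order_trans in blast)+
      then show ?thesis by (simp only: iter_restrict)
    qed
    have int_t: "integrable ?O (\<lambda>\<omega>. ?Q (\<omega> k) $ i $ l * ?R k (restrict \<omega> {..<k}) $ l $ j)" for l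
    proof (rule bint[OF Op, where c="cq * c0"])
      have "(\<lambda>\<omega>. ?Q (\<omega> k)) \<in> borel_measurable ?O"
        using measurable_compose[OF measurable_component_singleton[of k UNIV "\<lambda>_. D"] QD] by simp
      then show "(\<lambda>\<omega>. ?Q (\<omega> k) $ i $ l * ?R k (restrict \<omega> {..<k}) $ l $ j) \<in> borel_measurable ?O"
        unfolding iter_restrict using Rm[of k UNIV] by measurable
      fix \<omega>
      have "\<bar>?Q (\<omega> k) $ i $ l\<bar> \<le> cq" using Qb entry_le_norm order_trans by blast
      moreover have "\<bar>?R k (restrict \<omega> {..<k}) $ l $ j\<bar> \<le> c0" using Rb entry_le_norm order_trans by blast
      ultimately show "norm (?Q (\<omega> k) $ i $ l * ?R k (restrict \<omega> {..<k}) $ l $ j) \<le> cq * c0"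
        by (simp add: abs_mult mult_mono)
    qed
    have "(\<integral>\<omega>. ?R (Suc k) \<omega> \<partial>?O) $ i $ j = (\<integral>\<omega>. ?R (Suc k) \<omega> $ i $ j \<partial>?O)"
      by (rule int_entry[OF iR])
    also have "\<dots> = (\<integral>\<omega>. (\<Sum>l\<in>UNIV. ?Q (\<omega> k) $ i $ l * ?R k (restrict \<omega> {..<k}) $ l $ j) \<partial>?O)"
      by (simp only: step)
    also have "\<dots> = (\<Sum>l\<in>UNIV. \<integral>\<omega>. ?Q (\<omega> k) $ i $ l * ?R k (restrict \<omega> {..<k}) $ l $ j \<partial>?O)"
      by (intro Bochner_Integration.integral_sum int_t)
    also have "\<dots> = (\<Sum>l\<in>UNIV. (\<integral>S. ?Q S $ i $ l \<partial>D) * (\<integral>\<omega>. ?R k \<omega> $ l $ j \<partial>?O))"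
      by (simp only: trm)
    also have "\<dots> = (\<Sum>l\<in>UNIV. (\<integral>S. ?Q S \<partial>D) $ i $ l * (\<integral>\<omega>. ?R k \<omega> \<partial>?O) $ l $ j)"
      by (simp only: int_entry[OF iQ] int_entry[OF iR])
    also have "\<dots> = ((\<integral>S. ?Q S \<partial>D) ** (\<integral>\<omega>. ?R k \<omega> \<partial>?O)) $ i $ j"
      by (simp add: matrix_matrix_mult_def)
    finally show "(\<integral>\<omega>. ?R (Suc k) \<omega> \<partial>?O) $ i $ j = ((\<integral>S. ?Q S \<partial>D) ** (\<integral>\<omega>. ?R k \<omega> \<partial>?O)) $ i $ j" .
  qed
qed



lemma quad_form: "inner v ((M::real^'n^'n) *v v) = (\<Sum>a\<in>UNIV. \<Sum>b\<in>UNIV. M$a$b * (v$a * v$b))"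
  by (simp add: inner_vec_def matrix_vector_mult_def sum_distrib_left mult_ac)

lemma tri_form: "(\<Sum>j\<in>UNIV. \<Sum>a\<in>UNIV. \<Sum>b\<in>UNIV. (M::real^'n^'n)$a$b * (R$a$j * R$b$j))
    = (\<Sum>j\<in>UNIV. inner (column j (R::real^'m^'n)) (M *v column j R))"
  unfolding quad_form by (simp add: column_def)

lemma bl_sandwich: "bounded_linear (\<lambda>H::real^'n^'n. L ** H ** (N::real^'n^'n))"
proof -
  have "linear (\<lambda>H::real^'n^'n. L ** H ** N)"
  proof (rule linearI)
    fix H1 H2 :: "real^'n^'n"
    show "L ** (H1 + H2) ** N = L ** H1 ** N + L ** H2 ** N"
      unfolding matrix_eq
      by (simp add: matrix_vector_mul_assoc[symmetric] matrix_vector_mult_add_rdistrib matrix_vector_right_distrib)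
  next
    fix c :: real and H :: "real^'n^'n"
    show "L ** (c *\<^sub>R H) ** N = c *\<^sub>R (L ** H ** N)"
      unfolding matrix_eq
      by (simp add: matrix_vector_mul_assoc[symmetric] scaleR_mv matrix_vector_mult_scaleR)
  qed
  then show ?thesis by (simp add: linear_conv_bounded_linear)
qed

lemma range_sub:
  fixes G C :: "real^'n^'n"
  assumes sG: "transpose G = G" and sC: "transpose C = C"
    and ker: "\<And>x. G *v x = 0 \<Longrightarrow> C *v x = 0"
  shows "C *v z \<in> range (\<lambda>x. G *v x)"
proof -
  let ?V = "range (\<lambda>x. G *v x)"
  have sV: "subspace ?V" by (rule subspace_range_mat)
  let ?y = "C *v z"
  define y1 where "y1 = proj ?V ?y"
  define y2 where "y2 = ?y - y1"
  have y1V: "y1 \<in> ?V" unfolding y1_def by (rule proj_props(1)[OF sV])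
  have orth: "inner y2 (G *v t) = 0" for t unfolding y2_def y1_def
    by (rule proj_props(2)[OF sV]) blast
  have Gy2: "G *v y2 = 0"
  proof -
    have "inner (G *v y2) (G *v y2) = inner y2 (G *v (G *v y2))"
      using sym_inner[OF sG, of y2 "G *v y2"] by (simp add: inner_commute)
    also have "\<dots> = 0" by (rule orth)
    finally show ?thesis by simp
  qed
  then have "C *v y2 = 0" by (rule ker)
  then have "inner ?y y2 = 0" using sym_inner[OF sC, of y2 z] by (simp add: inner_commute)
  moreover have "inner y1 y2 = 0" using orth y1V by (auto simp: inner_commute)
  ultimately have "inner y2 y2 = 0" unfolding y2_def[symmetric] by (simp add: y2_def inner_diff_left)
  then have "y2 = 0" by simp
  then show ?thesis using y1V unfolding y2_def by simp
qed

lemma lam_bound: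
  fixes G :: "real^'n^'n" and R :: "real^'m^'n"
  assumes sG: "transpose G = G" and cols: "\<And>j. column j R \<in> range (\<lambda>x. G *v x)"
  shows "lambda_min_plus G * (norm R)^2 \<le> (\<Sum>j\<in>UNIV. \<Sum>a\<in>UNIV. \<Sum>b\<in>UNIV. G$a$b * (R$a$j * R$b$j))"
proof -
  have col: "lambda_min_plus G * (norm c)^2 \<le> inner c (G *v c)" if c: "c \<in> range (\<lambda>x. G *v x)" for c
  proof (cases "c = 0")
    case True then show ?thesis by simp
  next
    case False
    then obtain u where "lambda_min_plus G \<le> inner u (G *v u)" "inner u (G *v u) * (norm c)^2 \<le> inner c (G *v c)"
      using rayleigh[OF sG c] by blast
    then show ?thesis by (meson mult_right_mono order_trans zero_le_power2)
  qed
  have "lambda_min_plus G * (norm R)^2 = (\<Sum>j\<in>UNIV. lambda_min_plus G * (norm (column j R))^2)"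
    by (simp add: norm2_cols[of R] sum_distrib_left)
  also have "\<dots> \<le> (\<Sum>j\<in>UNIV. inner (column j R) (G *v column j R))"
    by (intro sum_mono col cols)
  finally show ?thesis by (simp only: tri_form)
qed



lemma int_sum3:
  fixes f :: "'j \<Rightarrow> 'k \<Rightarrow> 'l \<Rightarrow> 'a \<Rightarrow> real"
  assumes "\<And>j a b. integrable M (f j a b)"
  shows "(\<integral>x. (\<Sum>j\<in>J. \<Sum>a\<in>K. \<Sum>b\<in>L. f j a b x) \<partial>M) = (\<Sum>j\<in>J. \<Sum>a\<in>K. \<Sum>b\<in>L. \<integral>x. f j a b x \<partial>M)"
proof -
  have "(\<integral>x. (\<Sum>j\<in>J. \<Sum>a\<in>K. \<Sum>b\<in>L. f j a b x) \<partial>M) = (\<Sum>j\<in>J. \<integral>x. (\<Sum>a\<in>K. \<Sum>b\<in>L. f j a b x) \<partial>M)"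
    by (intro Bochner_Integration.integral_sum Bochner_Integration.integrable_sum assms)
  also have "\<dots> = (\<Sum>j\<in>J. \<Sum>a\<in>K. \<integral>x. (\<Sum>b\<in>L. f j a b x) \<partial>M)"
    by (intro sum.cong refl Bochner_Integration.integral_sum Bochner_Integration.integrable_sum assms)
  also have "\<dots> = (\<Sum>j\<in>J. \<Sum>a\<in>K. \<Sum>b\<in>L. \<integral>x. f j a b x \<partial>M)"
    by (intro sum.cong refl Bochner_Integration.integral_sum Bochner_Integration.integrable_sum assms)
  finally show ?thesis .
qed

lemma norm_P_mul:
  fixes P :: "real^'n^'n" and R :: "real^'m^'n"
  assumes "transpose P = P" "P ** P = P"
  shows "norm (P ** R) \<le> norm R"
proof -
  have "(norm (P ** R))^2 = (\<Sum>j\<in>UNIV. (norm (P *v column j R))^2)"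
    unfolding norm2_cols[of "P ** R"] column_mult ..
  also have "\<dots> \<le> (\<Sum>j\<in>UNIV. (norm (column j R))^2)"
    using symidem(3)[OF assms] by (intro sum_mono power_mono) auto
  also have "\<dots> = (norm R)^2" by (simp add: norm2_cols[of R])
  finally show ?thesis by (rule power2_le_imp_le) simp
qed

lemma step2:
  fixes A :: "real^'n^'m" and X0 :: "real^'m^'n" and D :: "(real^'t^'n) measure" and G :: "real^'n^'n"
  assumes D: "prob_space D" and sD: "sets D = sets borel"
    and EG: "(\<integral>S. Pm A S \<partial>D) = G" and sG: "transpose G = G"
    and cols: "\<And>k (\<omega>::nat \<Rightarrow> real^'t^'n) j. column j (pinv_iter A X0 k \<omega> - pinv A) \<in> range (\<lambda>x. G *v x)"
  shows "(\<integral>\<omega>. (norm (pinv_iter A X0 (Suc k) \<omega> - pinv A))^2 \<partial>PiM UNIV (\<lambda>_. D))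
         \<le> (1 - lambda_min_plus G) * (\<integral>\<omega>. (norm (pinv_iter A X0 k \<omega> - pinv A))^2 \<partial>PiM UNIV (\<lambda>_. D))"
proof -
  let ?O = "PiM UNIV (\<lambda>_::nat. D)"
  let ?R = "\<lambda>k \<omega>. pinv_iter A X0 k \<omega> - pinv A"
  let ?T = "\<lambda>j a b (\<omega>::nat \<Rightarrow> real^'t^'n). Pm A (\<omega> k) $ a $ b * (?R k \<omega> $ a $ j * ?R k \<omega> $ b $ j)"
  let ?W = "\<lambda>j a b (\<omega>::nat \<Rightarrow> real^'t^'n). ?R k \<omega> $ a $ j * ?R k \<omega> $ b $ j"
  let ?n2 = "\<lambda>k \<omega>. (norm (?R k \<omega>))^2"
  let ?lam = "lambda_min_plus G"
  define c0 where "c0 = norm (X0 - pinv A)"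
  have Op: "prob_space ?O" by (rule prob_space_PiM) (rule D)
  have PD: "(\<lambda>S. Pm A S) \<in> borel_measurable D" by (rule PmD[OF sD])
  have Rm: "?R k \<in> borel_measurable (PiM I (\<lambda>_. D))" if "{..<k} \<subseteq> I" for k I
    using iter_meas[OF sD that, of A X0] by measurable
  have Rb: "norm (?R k \<omega>) \<le> c0" for k \<omega> unfolding c0_def by (rule iter_norm)
  have Rbe: "\<bar>?R k \<omega> $ a $ j\<bar> \<le> c0" for k \<omega> a j using Rb entry_le_norm order_trans by blast
  have c0: "0 \<le> c0" unfolding c0_def by simp
  have Pmb: "norm (Pm A S) \<le> norm (mat 1 :: real^'n^'n)" for S
    using norm_P_mul[OF Pm_props(1,2), of A S "mat 1 :: real^'n^'n"] by simp
  have iPm: "integrable D (\<lambda>S. Pm A S)" by (rule bint[OF D PD Pmb])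
  have Pe: "\<bar>Pm A S $ a $ b\<bar> \<le> 1" for S a b by (rule entry_bound[OF Pm_props(1,2)])
  have Wb: "\<bar>?W j a b \<omega>\<bar> \<le> c0 * c0" for j a b \<omega>
    using Rbe[of k \<omega> a j] Rbe[of k \<omega> b j] by (simp add: abs_mult mult_mono)
  have Wm: "?W j a b \<in> borel_measurable (PiM I (\<lambda>_. D))" if "{..<k} \<subseteq> I" for j a b I
    using Rm[OF that] by measurable
  have iW: "integrable ?O (?W j a b)" for j a b
    by (rule bint[OF Op Wm[of UNIV]]) (use Wb in auto)
  have Tm: "?T j a b \<in> borel_measurable ?O" for j a b
  proof -
    have "(\<lambda>\<omega>::nat \<Rightarrow> real^'t^'n. Pm A (\<omega> k)) \<in> borel_measurable ?O"
      using measurable_compose[OF measurable_component_singleton[of k UNIV "\<lambda>_. D"] PD] by simp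
    then show ?thesis using Rm[of k UNIV] by measurable
  qed
  have iT: "integrable ?O (?T j a b)" for j a b
  proof (rule bint[OF Op Tm, where c="c0 * c0"])
    fix \<omega>
    have "\<bar>?T j a b \<omega>\<bar> = \<bar>Pm A (\<omega> k) $ a $ b\<bar> * \<bar>?W j a b \<omega>\<bar>" by (simp add: abs_mult)
    also have "\<dots> \<le> 1 * (c0 * c0)" by (rule mult_mono[OF Pe Wb]) auto
    finally show "norm (?T j a b \<omega>) \<le> c0 * c0" by simp
  qed
  have n2m: "?n2 k \<in> borel_measurable ?O" for k using Rm[of k UNIV] by measurable
  have in2: "integrable ?O (?n2 k)" for k
    by (rule bint[OF Op n2m, where c="c0^2"]) (use Rb c0 in \<open>auto intro: power_mono\<close>)
  have indT: "(\<integral>\<omega>. ?T j a b \<omega> \<partial>?O) = G $ a $ b * (\<integral>\<omega>. ?W j a b \<omega> \<partial>?O)" for j a b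
  proof -
    have f: "(\<lambda>S. Pm A S $ a $ b) \<in> borel_measurable D" using PD by measurable
    have "(\<integral>\<omega>. Pm A (\<omega> k) $ a $ b * ?W j a b (restrict \<omega> {..<k}) \<partial>?O)
          = (\<integral>S. Pm A S $ a $ b \<partial>D) * (\<integral>\<omega>. ?W j a b (restrict \<omega> {..<k}) \<partial>?O)"
      by (rule indep_int[OF D f Pe Wm[of "{..<k}"] Wb]) simp
    moreover have "(\<integral>S. Pm A S $ a $ b \<partial>D) = G $ a $ b"
      using int_entry[OF iPm, of a b] EG by simp
    ultimately show ?thesis by (simp only: iter_restrict)
  qed
  have pt: "?n2 (Suc k) \<omega> = ?n2 k \<omega> - (\<Sum>j\<in>UNIV. \<Sum>a\<in>UNIV. \<Sum>b\<in>UNIV. ?T j a b \<omega>)" for \<omega>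
    unfolding iter_step by (rule norm2_Q_mul[OF Pm_props(1,2)])
  have "(\<integral>\<omega>. ?n2 (Suc k) \<omega> \<partial>?O)
      = (\<integral>\<omega>. ?n2 k \<omega> \<partial>?O) - (\<integral>\<omega>. (\<Sum>j\<in>UNIV. \<Sum>a\<in>UNIV. \<Sum>b\<in>UNIV. ?T j a b \<omega>) \<partial>?O)"
    unfolding pt by (intro Bochner_Integration.integral_diff in2 Bochner_Integration.integrable_sum iT)
  also have "(\<integral>\<omega>. (\<Sum>j\<in>UNIV. \<Sum>a\<in>UNIV. \<Sum>b\<in>UNIV. ?T j a b \<omega>) \<partial>?O)
      = (\<Sum>j\<in>UNIV. \<Sum>a\<in>UNIV. \<Sum>b\<in>UNIV. \<integral>\<omega>. ?T j a b \<omega> \<partial>?O)"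
    by (rule int_sum3[where f="?T"]) (rule iT)
  also have "\<dots> = (\<Sum>j\<in>UNIV. \<Sum>a\<in>UNIV. \<Sum>b\<in>UNIV. \<integral>\<omega>. G $ a $ b * ?W j a b \<omega> \<partial>?O)"
    by (simp only: indT integral_mult_right_zero)
  also have "\<dots> = (\<integral>\<omega>. (\<Sum>j\<in>UNIV. \<Sum>a\<in>UNIV. \<Sum>b\<in>UNIV. G $ a $ b * ?W j a b \<omega>) \<partial>?O)"
    by (rule int_sum3[where f="\<lambda>j a b \<omega>. G $ a $ b * ?W j a b \<omega>", symmetric]) (intro Bochner_Integration.integrable_mult_right iW)
  finally have eq: "(\<integral>\<omega>. ?n2 (Suc k) \<omega> \<partial>?O)
      = (\<integral>\<omega>. ?n2 k \<omega> - (\<Sum>j\<in>UNIV. \<Sum>a\<in>UNIV. \<Sum>b\<in>UNIV. G $ a $ b * ?W j a b \<omega>) \<partial>?O)"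
    by (subst Bochner_Integration.integral_diff) (intro in2 Bochner_Integration.integrable_sum Bochner_Integration.integrable_mult_right iW)+
  also have "\<dots> \<le> (\<integral>\<omega>. (1 - ?lam) * ?n2 k \<omega> \<partial>?O)"
  proof (rule integral_mono)
    show "integrable ?O (\<lambda>\<omega>. ?n2 k \<omega> - (\<Sum>j\<in>UNIV. \<Sum>a\<in>UNIV. \<Sum>b\<in>UNIV. G $ a $ b * ?W j a b \<omega>))"
      by (intro Bochner_Integration.integrable_diff in2 Bochner_Integration.integrable_sum Bochner_Integration.integrable_mult_right iW)
    show "integrable ?O (\<lambda>\<omega>. (1 - ?lam) * ?n2 k \<omega>)" by (intro Bochner_Integration.integrable_mult_right in2)
    fix \<omega>
    have "?lam * ?n2 k \<omega> \<le> (\<Sum>j\<in>UNIV. \<Sum>a\<in>UNIV. \<Sum>b\<in>UNIV. G $ a $ b * ?W j a b \<omega>)"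
      by (rule lam_bound[OF sG]) (rule cols)
    then show "?n2 k \<omega> - (\<Sum>j\<in>UNIV. \<Sum>a\<in>UNIV. \<Sum>b\<in>UNIV. G $ a $ b * ?W j a b \<omega>) \<le> (1 - ?lam) * ?n2 k \<omega>"
      by (simp add: algebra_simps)
  qed
  also have "\<dots> = (1 - ?lam) * (\<integral>\<omega>. ?n2 k \<omega> \<partial>?O)" by simp
  finally show ?thesis .
qed



lemma part2:
  fixes A :: "real^'n^'m" and X0 :: "real^'m^'n" and D :: "(real^'t^'n) measure"
  assumes D: "prob_space D" and sD: "sets D = sets borel"
    and col: "col_range X0 \<subseteq> col_range (transpose A ** A)"
    and iH: "integrable D (sketch_H A)" and pd: "pos_def (\<integral>S. sketch_H A S \<partial>D)"
  shows "(\<integral>\<omega>. (norm (pinv_iter A X0 k \<omega> - pinv A))\<^sup>2 \<partial>(PiM UNIV (\<lambda>_. D)))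
         \<le> (1 - lambda_min_plus (transpose A ** A ** (\<integral>S. sketch_H A S \<partial>D) ** transpose A ** A)) ^ k
            * (norm (X0 - pinv A))\<^sup>2"
proof -
  let ?O = "PiM UNIV (\<lambda>_::nat. D)"
  let ?C = "transpose A ** A"
  let ?Hb = "\<integral>S. sketch_H A S \<partial>D"
  let ?G = "transpose A ** A ** ?Hb ** transpose A ** A"
  let ?lam = "lambda_min_plus ?G"
  let ?R = "\<lambda>k (\<omega>::nat \<Rightarrow> real^'t^'n). pinv_iter A X0 k \<omega> - pinv A"
  let ?E = "\<lambda>k. \<integral>\<omega>. (norm (?R k \<omega>))\<^sup>2 \<partial>?O"
  define c0 where "c0 = norm (X0 - pinv A)"
  have Op: "prob_space ?O" by (rule prob_space_PiM) (rule D)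
  have sHb: "transpose ?Hb = ?Hb" and pHb: "\<And>x. x \<noteq> 0 \<Longrightarrow> inner x (?Hb *v x) > 0"
    using pd unfolding pos_def_def by auto
  have Tform: "(\<lambda>S. Pm A S) = (\<lambda>S. ?C ** sketch_H A S ** ?C)"
    unfolding Pm_def by (simp add: matrix_mul_assoc)
  have EG: "(\<integral>S. Pm A S \<partial>D) = ?G"
  proof -
    have "(\<integral>S. ?C ** sketch_H A S ** ?C \<partial>D) = ?C ** ?Hb ** ?C"
      by (rule Bochner_Integration.integral_bounded_linear[OF bl_sandwich iH])
    then show ?thesis unfolding Tform by (simp add: matrix_mul_assoc)
  qed
  have sC: "transpose ?C = ?C" by (simp add: matrix_transpose_mul)
  have sG: "transpose ?G = ?G" using sHb by (simp add: matrix_transpose_mul matrix_mul_assoc)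
  have Gx: "?G *v x = ?C *v (?Hb *v (?C *v x))" for x
    by (simp add: matrix_vector_mul_assoc matrix_mul_assoc)
  have ker: "?C *v x = 0" if h: "?G *v x = 0" for x
  proof (rule ccontr)
    assume ne: "?C *v x \<noteq> 0"
    have "inner x (?G *v x) = inner (?Hb *v (?C *v x)) (?C *v x)"
      unfolding Gx by (rule sym_inner[OF sC])
    also have "\<dots> = inner (?C *v x) (?Hb *v (?C *v x))" by (rule inner_commute)
    also have "\<dots> > 0" by (rule pHb[OF ne])
    finally show False using h by simp
  qed
  have cols: "column j (?R k \<omega>) \<in> range (\<lambda>x. ?G *v x)" for k \<omega> j
  proof -
    have "?R k \<omega> *v axis j 1 \<in> range (\<lambda>z. ?C *v z)" by (rule iter_range[OF col])
    then obtain z where z: "?R k \<omega> *v axis j 1 = ?C *v z" by blast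
    have "?C *v z \<in> range (\<lambda>x. ?G *v x)" by (rule range_sub[OF sG sC ker])
    then show ?thesis using z by (simp add: matrix_vector_mult_basis)
  qed
  have step: "?E (Suc k) \<le> (1 - ?lam) * ?E k" for k
    by (rule step2[OF D sD EG sG]) (rule cols)
  have E0: "?E 0 = c0^2"
    using prob_space.prob_space[OF Op] unfolding c0_def by (simp add: prob_space.prob_space[OF Op] measure_def)
  show ?thesis
  proof (cases "X0 - pinv A = 0")
    case True
    then have "?R k \<omega> = 0" for \<omega> using iter_norm[of A X0 k \<omega>] by simp
    then show ?thesis using True by simp
  next
    case False
    then obtain j where cj: "column j (X0 - pinv A) \<noteq> 0"
    proof -
      assume h: "\<And>j. column j (X0 - pinv A) \<noteq> 0 \<Longrightarrow> thesis"
      show thesis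
      proof (rule ccontr)
        assume "\<not> thesis"
        then have "\<forall>j. column j (X0 - pinv A) = 0" using h by blast
        then have "(norm (X0 - pinv A))^2 = 0" by (simp add: norm2_cols[of "X0 - pinv A"])
        then show False using False by simp
      qed
    qed
    have "column j (?R 0 (\<lambda>_. undefined)) \<in> range (\<lambda>x. ?G *v x)" by (rule cols)
    then have cG: "column j (X0 - pinv A) \<in> range (\<lambda>x. ?G *v x)" by simp
    obtain u where u: "norm u = 1" "?lam \<le> inner u (?G *v u)"
      using rayleigh[OF sG cG cj] by blast
    have "inner u (?G *v u) \<le> 1"
    proof -
      have PD: "(\<lambda>S. Pm A S) \<in> borel_measurable D" by (rule PmD[OF sD])
      have Pmb: "norm (Pm A S) \<le> norm (mat 1 :: real^'n^'n)" for S
        using norm_P_mul[OF Pm_props(1,2), of A S "mat 1 :: real^'n^'n"] by simp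
      have iPm: "integrable D (\<lambda>S. Pm A S)" by (rule bint[OF D PD Pmb])
      have ie: "integrable D (\<lambda>S. Pm A S $ a $ b * (u $ a * u $ b))" for a b
        by (intro Bochner_Integration.integrable_mult_left integrable_bounded_linear[OF bounded_linear_vec_nth]
              bounded_linear_vec_nth iPm)
      have "inner u (?G *v u) = (\<Sum>a\<in>UNIV. \<Sum>b\<in>UNIV. ?G $ a $ b * (u $ a * u $ b))" by (rule quad_form)
      also have "\<dots> = (\<Sum>a\<in>UNIV. \<Sum>b\<in>UNIV. (\<integral>S. Pm A S $ a $ b * (u $ a * u $ b) \<partial>D))"
        by (simp add: EG[symmetric] int_entry[OF iPm])
      also have "\<dots> = (\<integral>S. (\<Sum>a\<in>UNIV. \<Sum>b\<in>UNIV. Pm A S $ a $ b * (u $ a * u $ b)) \<partial>D)"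
      proof -
        have "(\<integral>S. (\<Sum>a\<in>UNIV. \<Sum>b\<in>UNIV. Pm A S $ a $ b * (u $ a * u $ b)) \<partial>D)
            = (\<Sum>a\<in>UNIV. \<integral>S. (\<Sum>b\<in>UNIV. Pm A S $ a $ b * (u $ a * u $ b)) \<partial>D)"
          by (intro Bochner_Integration.integral_sum Bochner_Integration.integrable_sum ie)
        also have "\<dots> = (\<Sum>a\<in>UNIV. \<Sum>b\<in>UNIV. (\<integral>S. Pm A S $ a $ b * (u $ a * u $ b) \<partial>D))"
          by (intro sum.cong refl Bochner_Integration.integral_sum ie)
        finally show ?thesis by simp
      qed
      also have "\<dots> = (\<integral>S. inner u (Pm A S *v u) \<partial>D)" by (simp only: quad_form)
      also have "\<dots> \<le> (\<integral>S. 1 \<partial>D)"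
      proof (rule integral_mono)
        show "integrable D (\<lambda>S. inner u (Pm A S *v u))"
          unfolding quad_form by (intro Bochner_Integration.integrable_sum ie)
        show "integrable D (\<lambda>S. 1::real)" using D by (simp add: prob_space_def finite_measure.integrable_const)
        fix S show "inner u (Pm A S *v u) \<le> 1" using symidem(4)[OF Pm_props(1,2), of u A S] u(1) by simp
      qed
      also have "\<dots> = 1" using prob_space.prob_space[OF D] by (simp add: measure_def)
      finally show ?thesis .
    qed
    then have rho: "0 \<le> 1 - ?lam" using u(2) by linarith
    have "?E k \<le> (1 - ?lam) ^ k * c0^2"
    proof (induction k)
      case 0 then show ?case using E0 by simp
    next
      case (Suc k)
      have "?E (Suc k) \<le> (1 - ?lam) * ?E k" by (rule step)
      also have "\<dots> \<le> (1 - ?lam) * ((1 - ?lam) ^ k * c0^2)" by (rule mult_left_mono[OF Suc rho])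
      finally show ?case by (simp add: mult_ac)
    qed
    then show ?thesis unfolding c0_def .
  qed
qed


theorem theorem2:
  fixes A :: "real^'n^'m" and X0 :: "real^'m^'n" and D :: "(real^'t^'n) measure"
  assumes "prob_space D"
    and "sets D = sets borel"
    and "col_range X0 \<subseteq> col_range (transpose A ** A)"
  shows "(\<forall>k. (\<integral>\<omega>. (pinv_iter A X0 (Suc k) \<omega> - pinv A) \<partial>(PiM UNIV (\<lambda>_. D)))
              = (\<integral>S. (mat 1 - transpose A ** A ** sketch_H A S ** transpose A ** A) \<partial>D)
                ** (\<integral>\<omega>. (pinv_iter A X0 k \<omega> - pinv A) \<partial>(PiM UNIV (\<lambda>_. D))))
       \<and> ((integrable D (sketch_H A) \<and> pos_def (\<integral>S. sketch_H A S \<partial>D)) \<longrightarrow>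
           (\<forall>k. (\<integral>\<omega>. (norm (pinv_iter A X0 k \<omega> - pinv A))\<^sup>2 \<partial>(PiM UNIV (\<lambda>_. D)))
                \<le> (1 - lambda_min_plus (transpose A ** A ** (\<integral>S. sketch_H A S \<partial>D) ** transpose A ** A)) ^ k
                   * (norm (X0 - pinv A))\<^sup>2))"
proof (intro conjI allI impI)
  fix k
  show "(\<integral>\<omega>. (pinv_iter A X0 (Suc k) \<omega> - pinv A) \<partial>(PiM UNIV (\<lambda>_. D)))
              = (\<integral>S. (mat 1 - transpose A ** A ** sketch_H A S ** transpose A ** A) \<partial>D)
                ** (\<integral>\<omega>. (pinv_iter A X0 k \<omega> - pinv A) \<partial>(PiM UNIV (\<lambda>_. D)))"
    using part1[OF assms(1,2), of A X0 k] unfolding Pm_def .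
next
  fix k
  assume h: "integrable D (sketch_H A) \<and> pos_def (\<integral>S. sketch_H A S \<partial>D)"
  show "(\<integral>\<omega>. (norm (pinv_iter A X0 k \<omega> - pinv A))\<^sup>2 \<partial>(PiM UNIV (\<lambda>_. D)))
                \<le> (1 - lambda_min_plus (transpose A ** A ** (\<integral>S. sketch_H A S \<partial>D) ** transpose A ** A)) ^ k
                   * (norm (X0 - pinv A))\<^sup>2"
    using part2[OF assms(1,2,3)] h by blast
qed

end
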